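(* Let $\mathfrak{D}\subset\mathbb{R}^{m\times d}$ and let $g$ be a penalty. Assume one of the following: (I) $g$ satisfies A1–A4, or $(g,\mathfrak{D})$ satisfy B1–B4; or (II) $(g,\mathfrak{D})$ satisfy B1–B3. Set $D_0=1$ in case (I) and $D_0=\max(1/\kappa,1)$ in case (II) (with $\kappa$ from B2). Let $\mathbb{P}$ be a distribution on $\mathbb{R}^m$ satisfying C1 and C2 with constants $c>0$, $T\in(0,+\infty]$. Assume there are constants $C\ge1$, $h\ge1$ such that $\mathcal{N}(\mathfrak{D},\epsilon)\le (C/\epsilon)^h$ for all $0<\epsilon\le1$. Let $L>L_{\mathbb{P}}(\bar g)$ and define $\beta\triangleq h\cdot\max\big(\log\tfrac{2LC}{c},1\big)$. Assume the sample size $n$ satisfies $$\frac{n}{\log n}\ \ge\ \max\Big(8,\ \frac{\beta}{T^2},\ D_0\Big(\frac{c}{2L}\Big)^2\beta\Big)$$ (with $\beta/T^2=0$ if $T=\infty$). Then for every $x$ with $0\le x\le nT^2-\beta\log n$, if $x_1,\dots,x_n$ are drawn i.i.d. from $\mathbb{P}$ and $X=[x_1,\dots,x_n]$, we have, except with probability at most $\Lambda_n(L)+2e^{-x}$, $$\sup_{D\in\mathfrak{D}}\big|F_X(D)-\mathbb{E}_{x\sim\mathbb{P}}f_x(D)\big|\le \eta_n,$$ where $\eta_n=2c\sqrt{\frac{\beta\log n}{n}}+c\sqrt{\frac{\beta+x}{n}}$ in case (I) and $\eta_n=3c\sqrt{\frac{\beta\log n}{n}}+c\sqrt{\frac{\beta+x}{n}}$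 in case (II).
   Context: Let $m,d,n\ge1$. A penalty is a function $g:\mathbb{R}^d\to\mathbb{R}\cup\{+\infty\}$, not identically $+\infty$. For $x\in\mathbb{R}^m$, $D\in\mathbb{R}^{m\times d}$, $\alpha\in\mathbb{R}^d$ let $\mathcal{L}_x(D,\alpha)=\tfrac12\|x-D\alpha\|_2^2+g(\alpha)$ and $f_x(D)=\inf_{\alpha\in\mathbb{R}^d}\mathcal{L}_x(D,\alpha)$. For $X=[x_1,\dots,x_n]\in\mathbb{R}^{m\times n}$ let $F_X(D)=\frac1n\sum_{i=1}^n f_{x_i}(D)$. For $\Delta=[\delta_1,\dots,\delta_d]\in\mathbb{R}^{m\times d}$, $\|\Delta\|_{1\to2}=\sup_{\|\alpha\|_1\le1}\|\Delta\alpha\|_2=\max_j\|\delta_j\|_2$. Assumptions on $g$: A1: $g\ge0$; A2: $g$ is lower semi-continuous; A3: $g$ is coercive, i.e. $g(\alpha)\to+\infty$ as $\|\alpha\|\to\infty$; A4: $g(0)=0$. Joint assumptions on $g$ and a set $\mathfrak{D}\subset\mathbb{R}^{m\times d}$: B1: $g=\chi_{\mathcal K}$ is the indicator of a set $\mathcal K\subset\mathbb{R}^d$ ($0$ on $\mathcal K$, $+\infty$ outside); B2: there is $\kappa>0$ with $\kappa\|\alpha\|_1^2\le\|D\alpha\|_2^2$ for all $\alpha\in\mathcal K$, $D\in\mathfrak{D}$; B3: $0\in\mathcal K$; B4: $\mathfrak{D}$ is convex. The function $\bar g:[0,\infty)\to[0,\infty)$: under A1–A3, $\bar g(t)=\sup\{\|\alpha\|_1:\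 g(\alpha)\le t\}$ (with $\sup\emptyset=0$); under B1–B3, $\bar g(t)=2\sqrt{2t/\kappa}$. For $X=[x_1,\dots,x_n]$, $L_X(\bar g)=\frac1n\sum_{i=1}^n\|x_i\|_2\,\bar g(\|x_i\|_2^2/2)$. Probabilistic notions: $\mathbb{P}$ is a probability distribution on $\mathbb{R}^m$ and $x_1,\dots,x_n$ are i.i.d. with law $\mathbb{P}$, $X=[x_1,\dots,x_n]$. $L_{\mathbb{P}}(\bar g)=\mathbb{E}_{x\sim\mathbb{P}}\|x\|_2\bar g(\|x\|_2^2/2)$. $\Lambda_n(L)=\mathbb{P}(L_X(\bar g)>L)$. $\Gamma_n(\gamma)=\sup_{D\in\mathfrak{D}}\mathbb{P}\big(|F_X(D)-\mathbb{E}f_x(D)|>\gamma\big)$. C1: $L_{\mathbb{P}}(\bar g)<+\infty$. C2: there are $c>0$ and $T\in(0,+\infty]$ such that $\Gamma_n(c\tau)\le2\exp(-n\tau^2)$ for all $0\le\tau\le T$ and all $n$. Covering number: $\mathcal{N}(\mathfrak{D},\epsilon)$ is the minimal cardinality of a set $\mathfrak{Q}\subset\mathfrak{D}$ such that every $D\in\mathfrak{D}$ satisfies $\|D-q\|_{1\to2}\le\epsilon$ for some $q\in\mathfrak{Q}$. *)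

theory Defs
  imports "HOL-Analysis.Analysis" "HOL-Probability.Probability"
begin

text \<open>Vectors in R^d are real^'d, vectors in R^m are real^'m, and an m x d matrix
  D is real^'d^'m (m rows, d columns), acting by D *v alpha.\<close>

definition norm1 :: "real^'d \<Rightarrow> real" where
  "norm1 a = (\<Sum>j\<in>UNIV. \<bar>a $ j\<bar>)"

definition norm12 :: "real^'d^'m \<Rightarrow> real" where
  "norm12 Delta = Max (range (\<lambda>j. norm (column j Delta)))"

definition is_penalty :: "(real^'d \<Rightarrow> ereal) \<Rightarrow> bool" where
  "is_penalty g \<longleftrightarrow> (\<forall>a. g a \<noteq> -\<infinity>) \<and> (\<exists>a. g a \<noteq> \<infinity>)"

definition lsc_fun :: "(real^'d \<Rightarrow> ereal) \<Rightarrow> bool" where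
  "lsc_fun g \<longleftrightarrow> (\<forall>a s. s \<longlonglongrightarrow> a \<longrightarrow> g a \<le> liminf (\<lambda>k. g (s k)))"

definition assmA :: "(real^'d \<Rightarrow> ereal) \<Rightarrow> bool" where
  "assmA g \<longleftrightarrow> (\<forall>a. 0 \<le> g a) \<and> lsc_fun g \<and> (g \<longlongrightarrow> \<infinity>) at_infinity \<and> g 0 = 0"

definition assmB123 :: "(real^'d \<Rightarrow> ereal) \<Rightarrow> (real^'d^'m) set \<Rightarrow> real \<Rightarrow> bool" where
  "assmB123 g DD kappa \<longleftrightarrow>
     (\<exists>K. (\<forall>a. g a = (if a \<in> K then 0 else \<infinity>))
        \<and> (\<forall>a\<in>K. \<forall>D\<in>DD. kappa * (norm1 a)\<^sup>2 \<le> (norm (D *v a))\<^sup>2)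
        \<and> 0 \<in> K) \<and> 0 < kappa"

definition loss :: "(real^'d \<Rightarrow> ereal) \<Rightarrow> real^'m \<Rightarrow> real^'d^'m \<Rightarrow> real^'d \<Rightarrow> ereal" where
  "loss g x D a = ereal ((norm (x - D *v a))\<^sup>2 / 2) + g a"

definition fx :: "(real^'d \<Rightarrow> ereal) \<Rightarrow> real^'m \<Rightarrow> real^'d^'m \<Rightarrow> real" where
  "fx g x D = real_of_ereal (INF a. loss g x D a)"

definition FX :: "(real^'d \<Rightarrow> ereal) \<Rightarrow> nat \<Rightarrow> (nat \<Rightarrow> real^'m) \<Rightarrow> real^'d^'m \<Rightarrow> real" where
  "FX g n X D = (1 / real n) * (\<Sum>i<n. fx g (X i) D)"

definition gbarA :: "(real^'d \<Rightarrow> ereal) \<Rightarrow> real \<Rightarrow> real" where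
  "gbarA g t = (let S = {norm1 a | a. g a \<le> ereal t} in if S = {} then 0 else Sup S)"

definition gbarB :: "real \<Rightarrow> real \<Rightarrow> real" where
  "gbarB kappa t = 2 * sqrt (2 * t / kappa)"

definition LX :: "(real \<Rightarrow> real) \<Rightarrow> nat \<Rightarrow> (nat \<Rightarrow> real^'m) \<Rightarrow> real" where
  "LX gbar n X = (1 / real n) * (\<Sum>i<n. norm (X i) * gbar ((norm (X i))\<^sup>2 / 2))"

definition LP :: "(real \<Rightarrow> real) \<Rightarrow> (real^'m) measure \<Rightarrow> ennreal" where
  "LP gbar P = (\<integral>\<^sup>+ x. ennreal (norm x * gbar ((norm x)\<^sup>2 / 2)) \<partial>P)"

definition sample :: "(real^'m) measure \<Rightarrow> nat \<Rightarrow> (nat \<Rightarrow> real^'m) measure" where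
  "sample P n = PiM {..<n} (\<lambda>_. P)"

definition Lambda :: "(real \<Rightarrow> real) \<Rightarrow> (real^'m) measure \<Rightarrow> nat \<Rightarrow> real \<Rightarrow> real" where
  "Lambda gbar P n L = measure (sample P n) {X \<in> space (sample P n). LX gbar n X > L}"

definition Ef :: "(real^'d \<Rightarrow> ereal) \<Rightarrow> (real^'m) measure \<Rightarrow> real^'d^'m \<Rightarrow> real" where
  "Ef g P D = (\<integral>x. fx g x D \<partial>P)"

text \<open>C2 (Gamma_n(c tau) <= 2 exp(-n tau^2), with the sup over D unfolded). T may be infinite.\<close>
definition condC2 :: "(real^'d \<Rightarrow> ereal) \<Rightarrow> (real^'d^'m) set \<Rightarrow> (real^'m) measure \<Rightarrow> real \<Rightarrow> ereal \<Rightarrow> bool" where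
  "condC2 g DD P c T \<longleftrightarrow> (\<forall>n tau D. D \<in> DD \<longrightarrow> 0 \<le> tau \<longrightarrow> ereal tau \<le> T \<longrightarrow>
      measure (sample P n) {X \<in> space (sample P n). \<bar>FX g n X D - Ef g P D\<bar> > c * tau}
        \<le> 2 * exp (- real n * tau\<^sup>2))"

text \<open>Covering number w.r.t. the 1->2 norm; infinity if no finite cover exists.\<close>
definition covering_number :: "(real^'d^'m) set \<Rightarrow> real \<Rightarrow> ereal" where
  "covering_number DD eps = Inf {ereal (card Q) | Q. Q \<subseteq> DD \<and> finite Q \<and>
       (\<forall>D\<in>DD. \<exists>q\<in>Q. norm12 (D - q) \<le> eps)}"

text \<open>The three scenarios: (I) with A1--A4, (I) with B1--B4, (II) with B1--B3.
  Each fixes g-bar, D_0 and the leading constant a in eta_n (2 in case I, 3 in case II).\<close>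
definition scenario :: "(real^'d \<Rightarrow> ereal) \<Rightarrow> (real^'d^'m) set \<Rightarrow> (real \<Rightarrow> real) \<Rightarrow> real \<Rightarrow> real \<Rightarrow> bool" where
  "scenario g DD gbar D0 a \<longleftrightarrow>
     (assmA g \<and> gbar = gbarA g \<and> D0 = 1 \<and> a = 2)
   \<or> (\<exists>kappa. assmB123 g DD kappa \<and> convex DD \<and> gbar = gbarB kappa \<and> D0 = 1 \<and> a = 2)
   \<or> (\<exists>kappa. assmB123 g DD kappa \<and> gbar = gbarB kappa \<and> D0 = max (1 / kappa) 1 \<and> a = 3)"

end

theory Submission
  imports Defs
begin



lemma norm_column_le_norm12: "norm (column j M) \<le> norm12 M"
  unfolding norm12_def by (intro Max_ge) auto

lemma norm12_nonneg: "0 \<le> norm12 M"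
  using norm_column_le_norm12[of _ M] norm_ge_zero order_trans by blast

lemma norm1_nonneg: "0 \<le> norm1 a"
  unfolding norm1_def by (intro sum_nonneg) auto

lemma norm_mv_le: "norm ((M::real^'d^'m) *v a) \<le> norm12 M * norm1 a"
proof -
  have "norm (M *v a) = norm (\<Sum>i\<in>UNIV. (a$i) *s column i M)"
    by (simp add: matrix_mult_sum)
  also have "\<dots> \<le> (\<Sum>i\<in>UNIV. norm ((a$i) *s column i M))"
    by (rule norm_sum)
  also have "\<dots> = (\<Sum>i\<in>UNIV. \<bar>a$i\<bar> * norm (column i M))"
    by (simp add: scalar_mult_eq_scaleR)
  also have "\<dots> \<le> (\<Sum>i\<in>UNIV. \<bar>a$i\<bar> * norm12 M)"
    by (intro sum_mono mult_left_mono norm_column_le_norm12) auto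
  also have "\<dots> = norm12 M * norm1 a"
    by (simp add: norm1_def sum_distrib_left mult.commute)
  finally show ?thesis .
qed

lemma column_scaleR: "column j (c *\<^sub>R M) = c *\<^sub>R column j (M::real^'d^'m)"
  by (simp add: column_def vec_eq_iff)

lemma column_diff: "column j (A - B) = column j A - column j (B::real^'d^'m)"
  by (simp add: column_def vec_eq_iff)

lemma norm12_scaleR: "norm12 (c *\<^sub>R (M::real^'d^'m)) = \<bar>c\<bar> * norm12 M"
proof -
  have "range (\<lambda>j. norm (column j (c *\<^sub>R M))) = (\<lambda>y. \<bar>c\<bar> * y) ` range (\<lambda>j. norm (column j M))"
    by (auto simp: column_scaleR)
  moreover have "Max ((\<lambda>y. \<bar>c\<bar> * y) ` range (\<lambda>j. norm (column j M))) = \<bar>c\<bar> * Max (range (\<lambda>j. norm (column j M)))"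
    by (rule mono_Max_commute[symmetric]) (auto simp: mono_def mult_left_mono)
  ultimately show ?thesis unfolding norm12_def by simp
qed

lemma norm12_commute: "norm12 (A - B) = norm12 (B - (A::real^'d^'m))"
proof -
  have "B - A = (-1) *\<^sub>R (A - B)" by simp
  then show ?thesis using norm12_scaleR[of "-1" "A - B"] by simp
qed

locale gpos =
  fixes g :: "real^'d \<Rightarrow> ereal"
  assumes g_nonneg: "\<And>a. 0 \<le> g a" and g_zero: "g 0 = 0"
begin

lemma INF_bounds:
  "0 \<le> (INF a. loss g x D a)" "(INF a. loss g x D a) \<le> ereal ((norm x)\<^sup>2 / 2)"
proof -
  show "0 \<le> (INF a. loss g x D a)"
    by (rule INF_greatest) (simp add: loss_def g_nonneg)
  have "(INF a. loss g x D a) \<le> loss g x D 0" by (rule INF_lower) simp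
  then show "(INF a. loss g x D a) \<le> ereal ((norm x)\<^sup>2 / 2)"
    by (simp add: loss_def g_zero)
qed

lemma fx_ereal: "ereal (fx g x D) = (INF a. loss g x D a)"
proof -
  have "(INF a. loss g x D a) \<noteq> \<infinity>" "(INF a. loss g x D a) \<noteq> -\<infinity>"
    using INF_bounds[of x D] by auto
  then show ?thesis unfolding fx_def by (cases "(INF a. loss g x D a)") auto
qed

lemma fx_nonneg: "0 \<le> fx g x D"
  using INF_bounds(1)[of x D] fx_ereal[of x D, symmetric] by simp

lemma fx_le_half: "fx g x D \<le> (norm x)\<^sup>2 / 2"
  using INF_bounds(2)[of x D] fx_ereal[of x D, symmetric] by simp

lemma fx_le: assumes "g a = ereal \<gamma>" shows "fx g x D \<le> (norm (x - D *v a))\<^sup>2 / 2 + \<gamma>"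
proof -
  have "ereal (fx g x D) \<le> loss g x D a" unfolding fx_ereal by (rule INF_lower) simp
  then show ?thesis using assms by (simp add: loss_def)
qed

lemma near_min: assumes "0 < \<epsilon>"
  shows "\<exists>a \<gamma>. g a = ereal \<gamma> \<and> 0 \<le> \<gamma> \<and> (norm (x - D *v a))\<^sup>2 / 2 + \<gamma> < fx g x D + \<epsilon>"
proof -
  have "(INF a. loss g x D a) < ereal (fx g x D + \<epsilon>)"
    unfolding fx_ereal[symmetric] using assms by simp
  then obtain a where a: "loss g x D a < ereal (fx g x D + \<epsilon>)"
    by (auto simp: INF_less_iff)
  then have "g a \<noteq> \<infinity>" by (auto simp: loss_def)
  moreover have "g a \<noteq> -\<infinity>" using g_nonneg[of a] by auto
  ultimately obtain \<gamma> where \<gamma>: "g a = ereal \<gamma>" by (cases "g a") auto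
  have "0 \<le> \<gamma>" using g_nonneg[of a] \<gamma> by simp
  with a \<gamma> show ?thesis by (auto simp: loss_def)
qed

lemma step_gen:
  assumes "g a = ereal \<gamma>"
    and "(norm (x2 - D2 *v a))\<^sup>2 / 2 + \<gamma> \<le> fx g x2 D2 + \<epsilon>"
  shows "fx g x1 D1 \<le> fx g x2 D2 + \<epsilon> + norm (x2 - D2 *v a) * (norm (x1 - x2) + norm12 (D1 - D2) * norm1 a)
      + (norm (x1 - x2) + norm12 (D1 - D2) * norm1 a)\<^sup>2 / 2"
proof -
  define r where "r = norm (x2 - D2 *v a)"
  define e where "e = norm (x1 - x2) + norm12 (D1 - D2) * norm1 a"
  have eq: "x1 - D1 *v a = (x2 - D2 *v a) + ((x1 - x2) - (D1 - D2) *v a)"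
    by (simp add: matrix_vector_mult_diff_rdistrib algebra_simps)
  have "norm ((x1 - x2) - (D1 - D2) *v a) \<le> norm (x1 - x2) + norm ((D1 - D2) *v a)"
    by (rule norm_triangle_ineq4)
  also have "\<dots> \<le> e" unfolding e_def using norm_mv_le[of "D1 - D2" a] by simp
  finally have "norm ((x1 - x2) - (D1 - D2) *v a) \<le> e" .
  then have n1: "norm (x1 - D1 *v a) \<le> r + e"
    unfolding eq r_def using norm_triangle_ineq order_trans add_left_mono by blast
  have "(norm (x1 - D1 *v a))\<^sup>2 \<le> (r + e)\<^sup>2"
    using n1 by (intro power_mono) auto
  moreover have "fx g x1 D1 \<le> (norm (x1 - D1 *v a))\<^sup>2 / 2 + \<gamma>" by (rule fx_le[OF assms(1)])
  ultimately have "fx g x1 D1 \<le> (r + e)\<^sup>2 / 2 + \<gamma>" by simp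
  moreover have "r\<^sup>2 / 2 + \<gamma> \<le> fx g x2 D2 + \<epsilon>" using assms(2) r_def by simp
  ultimately have "fx g x1 D1 \<le> fx g x2 D2 + \<epsilon> + ((r + e)\<^sup>2 / 2 - r\<^sup>2 / 2)" by simp
  also have "(r + e)\<^sup>2 / 2 - r\<^sup>2 / 2 = r * e + e\<^sup>2 / 2" by (simp add: power2_eq_square algebra_simps)
  finally show ?thesis unfolding r_def e_def by simp
qed

lemma near_min_r: assumes "g a = ereal \<gamma>" "0 \<le> \<gamma>" "(norm (x - D *v a))\<^sup>2 / 2 + \<gamma> \<le> fx g x D + \<epsilon>"
  shows "norm (x - D *v a) \<le> sqrt ((norm x)\<^sup>2 + 2 * \<epsilon>)"
proof -
  have "(norm (x - D *v a))\<^sup>2 \<le> (norm x)\<^sup>2 + 2 * \<epsilon>" using assms fx_le_half[of x D] by simp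
  then show ?thesis by (simp add: real_le_rsqrt)
qed

end

lemma eps_limit:
  fixes k :: "real \<Rightarrow> real"
  assumes "\<And>\<epsilon>. 0 < \<epsilon> \<Longrightarrow> A \<le> k \<epsilon>" "(k \<longlongrightarrow> k0) (at_right 0)"
  shows "A \<le> k0"
proof (rule tendsto_lowerbound[OF assms(2)])
  show "\<not> trivial_limit (at_right (0::real))" by simp
  show "\<forall>\<^sub>F x in at_right 0. A \<le> k x"
    unfolding eventually_at_right_field using assms(1) by (intro exI[of _ 1]) auto
qed


lemma norm12_zero: "norm12 (0::real^'d^'m) = 0"
  using norm12_scaleR[of 0 "0::real^'d^'m"] by simp

context gpos begin

lemma fx_x_step: "fx g x1 D \<le> fx g x2 D + norm x2 * norm (x1 - x2) + (norm (x1 - x2))\<^sup>2 / 2"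
proof -
  define e where "e = norm (x1 - x2)"
  have e0: "0 \<le> e" unfolding e_def by simp
  have "fx g x1 D \<le> fx g x2 D + \<epsilon> + sqrt ((norm x2)\<^sup>2 + 2 * \<epsilon>) * e + e\<^sup>2 / 2" if ep: "0 < \<epsilon>" for \<epsilon>
  proof -
    obtain a \<gamma> where a: "g a = ereal \<gamma>" "0 \<le> \<gamma>" "(norm (x2 - D *v a))\<^sup>2 / 2 + \<gamma> < fx g x2 D + \<epsilon>"
      using near_min[OF ep] by blast
    have st: "fx g x1 D \<le> fx g x2 D + \<epsilon> + norm (x2 - D *v a) * e + e\<^sup>2 / 2"
      using step_gen[OF a(1), of x2 D \<epsilon> x1 D] a(3) by (simp add: norm12_zero e_def)
    have "norm (x2 - D *v a) \<le> sqrt ((norm x2)\<^sup>2 + 2 * \<epsilon>)"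
      using near_min_r[OF a(1,2) less_imp_le[OF a(3)]] .
    then have "norm (x2 - D *v a) * e \<le> sqrt ((norm x2)\<^sup>2 + 2 * \<epsilon>) * e"
      using e0 by (rule mult_right_mono)
    with st show ?thesis by simp
  qed
  moreover have "((\<lambda>\<epsilon>. fx g x2 D + \<epsilon> + sqrt ((norm x2)\<^sup>2 + 2 * \<epsilon>) * e + e\<^sup>2 / 2) \<longlongrightarrow>
      fx g x2 D + 0 + sqrt ((norm x2)\<^sup>2 + 2 * 0) * e + e\<^sup>2 / 2) (at_right 0)"
    by (intro tendsto_intros)
  ultimately have "fx g x1 D \<le> fx g x2 D + 0 + sqrt ((norm x2)\<^sup>2 + 2 * 0) * e + e\<^sup>2 / 2"
    by (rule eps_limit)
  then show ?thesis unfolding e_def by simp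
qed



end



context gpos begin
lemma fx_cont: "isCont (\<lambda>x. fx g x D) x0"
proof -
  define b where "b y = (norm x0 + norm (y - x0)) * norm (y - x0) + (norm (y - x0))\<^sup>2 / 2" for y
  have bnd: "\<bar>fx g y D - fx g x0 D\<bar> \<le> b y" for y
  proof -
    have 1: "fx g y D - fx g x0 D \<le> norm x0 * norm (y - x0) + (norm (y - x0))\<^sup>2 / 2"
      using fx_x_step[of y D x0] by simp
    have 2: "fx g x0 D - fx g y D \<le> norm y * norm (y - x0) + (norm (y - x0))\<^sup>2 / 2"
      using fx_x_step[of x0 D y] by (simp add: norm_minus_commute)
    have "norm y \<le> norm x0 + norm (y - x0)" using norm_triangle_ineq[of x0 "y - x0"] by simp
    then have "norm y * norm (y - x0) \<le> (norm x0 + norm (y - x0)) * norm (y - x0)"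
      by (rule mult_right_mono) simp
    moreover have "norm x0 * norm (y - x0) \<le> (norm x0 + norm (y - x0)) * norm (y - x0)"
      by (intro mult_right_mono) auto
    ultimately show ?thesis unfolding b_def abs_le_iff using 1 2 by linarith
  qed
  have blim: "(b \<longlongrightarrow> 0) (at x0)"
  proof -
    have n: "((\<lambda>y. norm (y - x0)) \<longlongrightarrow> 0) (at x0)"
      using tendsto_norm_zero[OF LIM_zero[OF tendsto_ident_at[of x0 UNIV]]] .
    have "(b \<longlongrightarrow> (norm x0 + 0) * 0 + 0\<^sup>2 / 2) (at x0)"
      unfolding b_def using tendsto_add[OF tendsto_mult[OF tendsto_add[OF tendsto_const n] n] tendsto_divide[OF tendsto_power[OF n, of 2] tendsto_const[of 2]], of "norm x0"]
      by simp
    then show ?thesis by simp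
  qed
  have ev: "\<forall>y. norm (fx g y D - fx g x0 D) \<le> b y" using bnd by simp
  have "((\<lambda>y. fx g y D - fx g x0 D) \<longlongrightarrow> 0) (at x0)"
    by (rule Lim_null_comparison[OF always_eventually[OF ev] blim])
  then show ?thesis unfolding isCont_def by (simp add: LIM_zero_cancel)
qed

lemma fx_borel: "(\<lambda>x. fx g x D) \<in> borel_measurable borel"
  by (intro borel_measurable_continuous_onI continuous_at_imp_continuous_on ballI fx_cont)
end



lemma segment_lip:
  fixes F :: "real^'d^'m \<Rightarrow> real"
  assumes S: "convex S" and B0: "0 \<le> B"
    and st: "\<And>D1 D2. D1 \<in> S \<Longrightarrow> D2 \<in> S \<Longrightarrow> F D1 \<le> F D2 + A * norm12 (D1 - D2) + B * (norm12 (D1 - D2))\<^sup>2"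
    and D: "D1 \<in> S" "D2 \<in> S"
  shows "F D1 \<le> F D2 + A * norm12 (D1 - D2)"
proof -
  define \<delta> where "\<delta> = norm12 (D1 - D2)"
  have main: "F D1 - F D2 - A * \<delta> \<le> B * \<delta>\<^sup>2 / real (Suc N)" for N
  proof -
    define M where "M = Suc N"
    have M0: "0 < real M" unfolding M_def by simp
    define P where "P k = D2 + (real k / real M) *\<^sub>R (D1 - D2)" for k
    have PS: "P k \<in> S" if "k \<le> M" for k
    proof -
      have u: "0 \<le> real k / real M" "real k / real M \<le> 1" using that M0 by auto
      have "P k = (1 - real k / real M) *\<^sub>R D2 + (real k / real M) *\<^sub>R D1"
        unfolding P_def by (simp add: algebra_simps)
      then show ?thesis using convexD[OF S D(2) D(1), of "1 - real k / real M" "real k / real M"] u by simp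
    qed
    have dP: "P (Suc k) - P k = (1 / real M) *\<^sub>R (D1 - D2)" for k
      unfolding P_def using M0 by (simp add: algebra_simps add_divide_distrib scaleR_add_left)
    have nP: "norm12 (P (Suc k) - P k) = \<delta> / real M" for k
      unfolding dP norm12_scaleR \<delta>_def by simp
    have "F D1 - F D2 = (\<Sum>k<M. F (P (Suc k)) - F (P k))"
      by (subst sum_lessThan_telescope) (use M0 in \<open>simp add: P_def\<close>)
    also have "\<dots> \<le> (\<Sum>k<M. A * (\<delta> / real M) + B * (\<delta> / real M)\<^sup>2)"
    proof (rule sum_mono)
      fix k assume "k \<in> {..<M}"
      then have "Suc k \<le> M" "k \<le> M" by auto
      then show "F (P (Suc k)) - F (P k) \<le> A * (\<delta> / real M) + B * (\<delta> / real M)\<^sup>2"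
        using st[OF PS PS, of "Suc k" k] nP[of k] by simp
    qed
    also have "\<dots> = A * \<delta> + B * \<delta>\<^sup>2 / real M"
      using M0 by (simp add: power2_eq_square field_simps)
    finally show ?thesis unfolding M_def by simp
  qed
  have lim: "(\<lambda>N. B * \<delta>\<^sup>2 / real (Suc N)) \<longlonglongrightarrow> 0"
    using LIMSEQ_Suc[OF lim_const_over_n[of "B * \<delta>\<^sup>2"]] by simp
  have "F D1 - F D2 - A * \<delta> \<le> 0"
    by (rule LIMSEQ_le_const[OF lim]) (use main in blast)
  then show ?thesis unfolding \<delta>_def by simp
qed

locale caseA =
  fixes g :: "real^'d \<Rightarrow> ereal"
  assumes A: "assmA g"
begin

lemma g_nonneg: "0 \<le> g a" and g_zero: "g 0 = 0" and g_lsc: "lsc_fun g"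
  and g_coer: "(g \<longlongrightarrow> \<infinity>) at_infinity"
  using A unfolding assmA_def by auto

sublocale gpos g by unfold_locales (auto simp: g_nonneg g_zero)

lemma bound_R: "\<exists>R. \<forall>a. g a \<le> ereal t \<longrightarrow> norm a \<le> R"
proof -
  have "eventually (\<lambda>a. ereal t < g a) at_infinity" using g_coer unfolding tendsto_PInfty by blast
  then obtain R where "\<forall>a. R \<le> norm a \<longrightarrow> ereal t < g a" unfolding eventually_at_infinity by blast
  then show ?thesis by (intro exI[of _ R]) (meson linorder_not_le less_le_not_le)
qed

lemma norm1_le: "norm1 (a::real^'d) \<le> real CARD('d) * norm a"
proof -
  have "norm1 a \<le> (\<Sum>j\<in>(UNIV::'d set). norm a)"
    unfolding norm1_def by (intro sum_mono component_le_norm_cart)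
  then show ?thesis by simp
qed

lemma gbar_upper: assumes "g a \<le> ereal t" shows "norm1 a \<le> gbarA g t"
proof -
  obtain R where R: "\<forall>a. g a \<le> ereal t \<longrightarrow> norm a \<le> R" using bound_R by blast
  define S where "S = {norm1 a | a. g a \<le> ereal t}"
  have "bdd_above S"
  proof
    fix y assume "y \<in> S"
    then obtain b where "y = norm1 b" "g b \<le> ereal t" unfolding S_def by blast
    moreover have "norm b \<le> R" using R \<open>g b \<le> ereal t\<close> by blast
    ultimately show "y \<le> real CARD('d) * R"
      using norm1_le[of b] by (meson mult_left_mono of_nat_0_le_iff order_trans)
  qed
  moreover have "norm1 a \<in> S" unfolding S_def using assms by blast
  ultimately have "norm1 a \<le> Sup S" by (intro cSup_upper)
  moreover have "S \<noteq> {}" using \<open>norm1 a \<in> S\<close> by blast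
  ultimately show ?thesis unfolding gbarA_def S_def[symmetric] by (simp add: Let_def)
qed

lemma gbar_nonneg: "0 \<le> gbarA g t"
proof (cases "{norm1 a | a. g a \<le> ereal t} = {}")
  case True then show ?thesis by (simp add: gbarA_def)
next
  case False
  then obtain a where "g a \<le> ereal t" by blast
  then show ?thesis using gbar_upper[of a t] norm1_nonneg[of a] by simp
qed

lemma gbar_mono: "mono (gbarA g)"
proof (rule monoI)
  fix s t :: real assume st: "s \<le> t"
  show "gbarA g s \<le> gbarA g t"
  proof (cases "{norm1 a | a. g a \<le> ereal s} = {}")
    case True then have "gbarA g s = 0" by (simp add: gbarA_def)
    then show ?thesis using gbar_nonneg[of t] by simp
  next
    case False
    have "Sup {norm1 a | a. g a \<le> ereal s} \<le> gbarA g t"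
    proof (rule cSup_least[OF False])
      fix y assume "y \<in> {norm1 a | a. g a \<le> ereal s}"
      then obtain a where "y = norm1 a" "g a \<le> ereal s" by blast
      then show "y \<le> gbarA g t" using gbar_upper[of a t] st order_trans by force
    qed
    moreover have "gbarA g s = Sup {norm1 a | a. g a \<le> ereal s}"
      using False unfolding gbarA_def Let_def by (simp only: if_False)
    ultimately show ?thesis by simp
  qed
qed

lemma exact_min: "\<exists>a \<gamma>. g a = ereal \<gamma> \<and> 0 \<le> \<gamma> \<and> (norm (x - D *v a))\<^sup>2 / 2 + \<gamma> \<le> fx g x D"
proof -
  define q where "q a = (norm (x - D *v a))\<^sup>2 / 2" for a
  have "\<exists>a \<gamma>. g a = ereal \<gamma> \<and> 0 \<le> \<gamma> \<and> q a + \<gamma> < fx g x D + 1 / real (Suc k)" for k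
    unfolding q_def by (rule near_min) simp
  then obtain \<alpha> \<Gamma> where al: "\<And>k. g (\<alpha> k) = ereal (\<Gamma> k)" "\<And>k. 0 \<le> \<Gamma> k"
    "\<And>k. q (\<alpha> k) + \<Gamma> k < fx g x D + 1 / real (Suc k)"
    by metis
  obtain R where R: "\<forall>a. g a \<le> ereal (fx g x D + 1) \<longrightarrow> norm a \<le> R" using bound_R by blast
  have "\<alpha> k \<in> cball 0 R" for k
  proof -
    have "q (\<alpha> k) \<ge> 0" unfolding q_def by simp
    moreover have "1 / real (Suc k) \<le> 1" by simp
    ultimately have "\<Gamma> k \<le> fx g x D + 1" using al(3)[of k] by linarith
    then show ?thesis using R al(1)[of k] by simp
  qed
  then obtain l r where lr: "strict_mono r" "(\<alpha> \<circ> r) \<longlonglongrightarrow> l"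
    using seq_compactE[OF compact_imp_seq_compact[OF compact_cball], of \<alpha> 0 R] by blast
  define h where "h j = fx g x D + 1 / real (Suc (r j)) - q (\<alpha> (r j))" for j
  have qlim: "(\<lambda>j. q (\<alpha> (r j))) \<longlonglongrightarrow> q l"
  proof -
    have "(\<lambda>j. D *v (\<alpha> (r j))) \<longlonglongrightarrow> D *v l"
      using isCont_tendsto_compose[OF matrix_vector_mult_linear_continuous_at lr(2)[unfolded comp_def]] .
    then show ?thesis unfolding q_def by (intro tendsto_intros) auto
  qed
  have ilim: "(\<lambda>j. 1 / real (Suc (r j))) \<longlonglongrightarrow> 0"
    using LIMSEQ_subseq_LIMSEQ[OF LIMSEQ_Suc[OF lim_const_over_n[of 1]] lr(1)] by (simp add: comp_def)
  have hlim: "h \<longlonglongrightarrow> fx g x D + 0 - q l"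
    unfolding h_def by (intro tendsto_intros ilim qlim)
  have "g l \<le> liminf (\<lambda>k. g ((\<alpha> \<circ> r) k))"
    using g_lsc lr(2) unfolding lsc_fun_def by blast
  also have "\<dots> \<le> liminf (\<lambda>j. ereal (h j))"
  proof (rule Liminf_mono, rule always_eventually, rule allI)
    fix j show "g ((\<alpha> \<circ> r) j) \<le> ereal (h j)"
      using al(1)[of "r j"] al(3)[of "r j"] unfolding h_def by simp
  qed
  also have "\<dots> = ereal (fx g x D - q l)"
    using lim_imp_Liminf[OF trivial_limit_sequentially tendsto_ereal[OF hlim]] by simp
  finally have gl: "g l \<le> ereal (fx g x D - q l)" .
  then have "g l \<noteq> \<infinity>" by auto
  moreover have "g l \<noteq> -\<infinity>" using g_nonneg[of l] by auto
  ultimately obtain \<gamma> where \<gamma>: "g l = ereal \<gamma>" by (cases "g l") auto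
  have "0 \<le> \<gamma>" using g_nonneg[of l] \<gamma> by simp
  moreover have "q l + \<gamma> \<le> fx g x D" using gl \<gamma> by simp
  ultimately show ?thesis using \<gamma> unfolding q_def by blast
qed

lemma stepA: "fx g x D1 \<le> fx g x D2 + norm x * gbarA g ((norm x)\<^sup>2 / 2) * norm12 (D1 - D2)
    + (gbarA g ((norm x)\<^sup>2 / 2))\<^sup>2 / 2 * (norm12 (D1 - D2))\<^sup>2"
proof -
  define G where "G = gbarA g ((norm x)\<^sup>2 / 2)"
  define \<delta> where "\<delta> = norm12 (D1 - D2)"
  obtain a \<gamma> where a: "g a = ereal \<gamma>" "0 \<le> \<gamma>" "(norm (x - D2 *v a))\<^sup>2 / 2 + \<gamma> \<le> fx g x D2"
    using exact_min by blast
  have st: "fx g x D1 \<le> fx g x D2 + norm (x - D2 *v a) * (\<delta> * norm1 a) + (\<delta> * norm1 a)\<^sup>2 / 2"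
    using step_gen[OF a(1), of x D2 0 x D1] a(3) unfolding \<delta>_def by simp
  have r: "norm (x - D2 *v a) \<le> norm x" using near_min_r[OF a(1,2), of x D2 0] a(3) by simp
  have "0 \<le> (norm (x - D2 *v a))\<^sup>2 / 2" by simp
  then have "\<gamma> \<le> (norm x)\<^sup>2 / 2" using a(3) fx_le_half[of x D2] by linarith
  then have "g a \<le> ereal ((norm x)\<^sup>2 / 2)" using a(1) by simp
  then have n1: "norm1 a \<le> G" unfolding G_def by (rule gbar_upper)
  have d0: "0 \<le> \<delta>" unfolding \<delta>_def by (rule norm12_nonneg)
  have e: "\<delta> * norm1 a \<le> \<delta> * G" using n1 d0 by (rule mult_left_mono)
  have e0: "0 \<le> \<delta> * norm1 a" using d0 norm1_nonneg[of a] by simp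
  have "norm (x - D2 *v a) * (\<delta> * norm1 a) \<le> norm x * (\<delta> * G)"
    by (rule mult_mono[OF r e norm_ge_zero e0])
  moreover have "(\<delta> * norm1 a)\<^sup>2 \<le> (\<delta> * G)\<^sup>2" using e e0 by (rule power_mono)
  ultimately have "fx g x D1 \<le> fx g x D2 + norm x * (\<delta> * G) + (\<delta> * G)\<^sup>2 / 2" using st by simp
  then show ?thesis unfolding G_def[symmetric] \<delta>_def[symmetric] by (simp add: power_mult_distrib algebra_simps)
qed

lemma lipA: "\<bar>fx g x D1 - fx g x D2\<bar> \<le> norm x * gbarA g ((norm x)\<^sup>2 / 2) * norm12 (D1 - D2)"
proof -
  have B0: "0 \<le> (gbarA g ((norm x)\<^sup>2 / 2))\<^sup>2 / 2" by simp
  have "fx g x E1 \<le> fx g x E2 + norm x * gbarA g ((norm x)\<^sup>2 / 2) * norm12 (E1 - E2)" for E1 E2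
    by (rule segment_lip[of UNIV, OF convex_UNIV B0 stepA]) auto
  from this[of D1 D2] this[of D2 D1] show ?thesis by (simp add: abs_le_iff norm12_commute[of D2 D1])
qed

end




locale caseB =
  fixes g :: "real^'d \<Rightarrow> ereal" and DD :: "(real^'d^'m) set" and \<kappa> :: real
  assumes B: "assmB123 g DD \<kappa>"
begin

lemma kpos: "0 < \<kappa>" using B unfolding assmB123_def by auto

lemma Kex: "\<exists>K. (\<forall>a. g a = (if a \<in> K then 0 else \<infinity>))
        \<and> (\<forall>a\<in>K. \<forall>D\<in>DD. \<kappa> * (norm1 a)\<^sup>2 \<le> (norm (D *v a))\<^sup>2) \<and> 0 \<in> K"
  using B unfolding assmB123_def by auto

lemma g_nonneg: "0 \<le> g a" using Kex by (metis ereal_less_eq(1) order_refl)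
lemma g_zero: "g 0 = 0" using Kex by auto

lemma g_fin: assumes "g a = ereal \<gamma>" "D \<in> DD" shows "\<kappa> * (norm1 a)\<^sup>2 \<le> (norm (D *v a))\<^sup>2"
  using Kex assms by (metis PInfty_neq_ereal(1))

sublocale gpos g by unfold_locales (auto simp: g_nonneg g_zero)

lemma gbarB_eq: "gbarB \<kappa> ((norm x)\<^sup>2 / 2) = 2 * norm x / sqrt \<kappa>"
  unfolding gbarB_def by (simp add: real_sqrt_divide)

lemma stepB: assumes D: "D1 \<in> DD" "D2 \<in> DD"
  shows "fx g x D1 \<le> fx g x D2 + norm x * gbarB \<kappa> ((norm x)\<^sup>2 / 2) * norm12 (D1 - D2)
    + (gbarB \<kappa> ((norm x)\<^sup>2 / 2))\<^sup>2 / 2 * (norm12 (D1 - D2))\<^sup>2"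
proof -
  define \<delta> where "\<delta> = norm12 (D1 - D2)"
  have d0: "0 \<le> \<delta>" unfolding \<delta>_def by (rule norm12_nonneg)
  define R where "R \<epsilon> = sqrt ((norm x)\<^sup>2 + 2 * \<epsilon>)" for \<epsilon>
  define k where "k \<epsilon> = fx g x D2 + \<epsilon> + R \<epsilon> * (\<delta> * ((norm x + R \<epsilon>) / sqrt \<kappa>))
      + (\<delta> * ((norm x + R \<epsilon>) / sqrt \<kappa>))\<^sup>2 / 2" for \<epsilon>
  have "fx g x D1 \<le> k \<epsilon>" if ep: "0 < \<epsilon>" for \<epsilon>
  proof -
    obtain a \<gamma> where a: "g a = ereal \<gamma>" "0 \<le> \<gamma>" "(norm (x - D2 *v a))\<^sup>2 / 2 + \<gamma> < fx g x D2 + \<epsilon>"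
      using near_min[OF ep] by blast
    have st: "fx g x D1 \<le> fx g x D2 + \<epsilon> + norm (x - D2 *v a) * (\<delta> * norm1 a) + (\<delta> * norm1 a)\<^sup>2 / 2"
      using step_gen[OF a(1), of x D2 \<epsilon> x D1] a(3) unfolding \<delta>_def by simp
    have r: "norm (x - D2 *v a) \<le> R \<epsilon>" unfolding R_def using near_min_r[OF a(1,2) less_imp_le[OF a(3)]] .
    have R0: "0 \<le> R \<epsilon>" unfolding R_def using ep by simp
    have "\<kappa> * (norm1 a)\<^sup>2 \<le> (norm (D2 *v a))\<^sup>2" using g_fin[OF a(1) D(2)] .
    moreover have "norm (D2 *v a) \<le> norm x + R \<epsilon>"
      using norm_triangle_ineq4[of x "x - D2 *v a"] r by simp
    ultimately have "\<kappa> * (norm1 a)\<^sup>2 \<le> (norm x + R \<epsilon>)\<^sup>2"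
      by (meson norm_ge_zero order_trans power_mono)
    then have "sqrt (\<kappa> * (norm1 a)\<^sup>2) \<le> norm x + R \<epsilon>"
      using R0 by (simp add: real_sqrt_le_iff real_le_lsqrt)
    then have "sqrt \<kappa> * norm1 a \<le> norm x + R \<epsilon>"
      by (simp add: real_sqrt_mult norm1_nonneg)
    then have n1: "norm1 a \<le> (norm x + R \<epsilon>) / sqrt \<kappa>"
      using kpos by (simp add: field_simps)
    have e: "\<delta> * norm1 a \<le> \<delta> * ((norm x + R \<epsilon>) / sqrt \<kappa>)" using n1 d0 by (rule mult_left_mono)
    have e0: "0 \<le> \<delta> * norm1 a" using d0 norm1_nonneg[of a] by simp
    have "norm (x - D2 *v a) * (\<delta> * norm1 a) \<le> R \<epsilon> * (\<delta> * ((norm x + R \<epsilon>) / sqrt \<kappa>))"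
      by (rule mult_mono[OF r e R0 e0])
    moreover have "(\<delta> * norm1 a)\<^sup>2 \<le> (\<delta> * ((norm x + R \<epsilon>) / sqrt \<kappa>))\<^sup>2" using e e0 by (rule power_mono)
    ultimately show ?thesis using st unfolding k_def by simp
  qed
  moreover have "(k \<longlongrightarrow> fx g x D2 + 0 + sqrt ((norm x)\<^sup>2 + 2 * 0) * (\<delta> * ((norm x + sqrt ((norm x)\<^sup>2 + 2 * 0)) / sqrt \<kappa>))
      + (\<delta> * ((norm x + sqrt ((norm x)\<^sup>2 + 2 * 0)) / sqrt \<kappa>))\<^sup>2 / 2) (at_right 0)"
    unfolding k_def R_def using kpos by (intro tendsto_intros) auto
  ultimately have "fx g x D1 \<le> fx g x D2 + 0 + sqrt ((norm x)\<^sup>2 + 2 * 0) * (\<delta> * ((norm x + sqrt ((norm x)\<^sup>2 + 2 * 0)) / sqrt \<kappa>))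
      + (\<delta> * ((norm x + sqrt ((norm x)\<^sup>2 + 2 * 0)) / sqrt \<kappa>))\<^sup>2 / 2"
    by (rule eps_limit)
  then show ?thesis unfolding gbarB_eq \<delta>_def[symmetric]
    by (simp add: power_mult_distrib power_divide algebra_simps)
qed

lemma lipB_convex: assumes "convex DD" "D1 \<in> DD" "D2 \<in> DD"
  shows "\<bar>fx g x D1 - fx g x D2\<bar> \<le> norm x * gbarB \<kappa> ((norm x)\<^sup>2 / 2) * norm12 (D1 - D2)"
proof -
  have B0: "0 \<le> (gbarB \<kappa> ((norm x)\<^sup>2 / 2))\<^sup>2 / 2" by simp
  have "fx g x E1 \<le> fx g x E2 + norm x * gbarB \<kappa> ((norm x)\<^sup>2 / 2) * norm12 (E1 - E2)"
    if "E1 \<in> DD" "E2 \<in> DD" for E1 E2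
    by (rule segment_lip[OF assms(1) B0 stepB that])
  from this[of D1 D2] this[of D2 D1] assms show ?thesis by (simp add: abs_le_iff norm12_commute[of D2 D1])
qed

lemma lipB: assumes "D1 \<in> DD" "D2 \<in> DD"
  shows "\<bar>fx g x D1 - fx g x D2\<bar> \<le> norm x * gbarB \<kappa> ((norm x)\<^sup>2 / 2) *
     (norm12 (D1 - D2) + (1 / sqrt \<kappa>) * (norm12 (D1 - D2))\<^sup>2)"
proof -
  have eq: "(gbarB \<kappa> ((norm x)\<^sup>2 / 2))\<^sup>2 / 2 = norm x * gbarB \<kappa> ((norm x)\<^sup>2 / 2) * (1 / sqrt \<kappa>)"
    unfolding gbarB_eq using kpos by (simp add: power_divide power2_eq_square field_simps)
  from stepB[OF assms, of x] stepB[OF assms(2,1), of x] show ?thesis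
    unfolding eq by (simp add: abs_le_iff norm12_commute[of D2 D1] algebra_simps)
qed

end




lemma ln_n_ge2:
  assumes "8 \<le> real n / ln (real n)"
  shows "2 \<le> ln (real n)" "2 \<le> n"
proof -
  have "n \<noteq> 0"
  proof
    assume "n = 0" with assms show False by simp
  qed
  moreover have "n \<noteq> 1"
  proof
    assume "n = 1" with assms show False by simp
  qed
  ultimately show n2: "2 \<le> n" by linarith
  have lnpos: "0 < ln (real n)" using n2 by simp
  have nb: "8 * ln (real n) \<le> real n" using assms lnpos by (simp add: field_simps)
  show "2 \<le> ln (real n)"
  proof (cases "8 \<le> n")
    case True
    have "ln (8::real) = ln (2 ^ 3)" by simp
    also have "\<dots> = 3 * ln 2" by (subst ln_realpow) auto
    finally have "ln (8::real) \<ge> 2" using ln2_ge_two_thirds by simp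
    moreover have "ln (8::real) \<le> ln (real n)" using True by simp
    ultimately show ?thesis by simp
  next
    case False
    then have n7: "real n \<le> 7" by simp
    have "ln (1 / real n) \<le> 1 / real n - 1" using n2 by (intro ln_le_minus_one) simp
    then have l1: "1 - 1 / real n \<le> ln (real n)" using n2 by (simp add: ln_div)
    show ?thesis
    proof (cases "4 \<le> n")
      case True
      have "ln (4::real) = 2 * ln 2" using ln_realpow[of 2 2] by simp
      then have "ln (4::real) \<ge> 1" using ln2_ge_two_thirds by simp
      moreover have "ln (4::real) \<le> ln (real n)" using True by simp
      ultimately have "1 \<le> ln (real n)" by simp
      with nb n7 show ?thesis by simp
    next
      case False
      then have "real n \<le> 3" by simp
      moreover have "1 / real n \<le> 1 / 2" using n2 by (simp add: field_simps)
      ultimately show ?thesis using l1 nb by simp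
    qed
  qed
qed

lemma arith_main:
  fixes n :: nat and c L C h D0 x \<beta> s \<epsilon> :: real
  assumes n1: "8 \<le> real n / ln (real n)"
    and n3: "D0 * (c / (2 * L))\<^sup>2 * \<beta> \<le> real n / ln (real n)"
    and c: "0 < c" and L: "0 < L" and C: "1 \<le> C" and h: "1 \<le> h" and D0: "1 \<le> D0"
    and x: "0 \<le> x"
    and \<beta>: "\<beta> = h * max (ln (2 * L * C / c)) 1"
    and s: "s = sqrt (\<beta> * ln (real n) / real n)"
    and \<epsilon>: "\<epsilon> = c * s / (2 * L)"
  shows "0 < \<epsilon>" "D0 * \<epsilon>\<^sup>2 \<le> 1" "\<epsilon> \<le> 1" "0 \<le> h * ln (C / \<epsilon>)"
    "h * ln (C / \<epsilon>) \<le> \<beta> * ln (real n)" "2 * L * \<epsilon> = c * s"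
    "c * sqrt ((x + h * ln (C / \<epsilon>)) / real n) \<le> c * sqrt ((\<beta> + x) / real n) + c * s"
    "(C / \<epsilon>) powr h * exp (- real n * (sqrt ((x + h * ln (C / \<epsilon>)) / real n))\<^sup>2) = exp (- x)"
proof -
  have lnn: "2 \<le> ln (real n)" and n2: "2 \<le> n" using ln_n_ge2[OF n1] by auto
  have npos: "0 < real n" using n2 by simp
  have "h * 1 \<le> h * max (ln (2 * L * C / c)) 1" by (rule mult_left_mono) (use h in auto)
  then have hb: "h \<le> \<beta>" unfolding \<beta> by simp
  have b1: "1 \<le> \<beta>" using h hb by simp
  have bl: "1 \<le> \<beta> * ln (real n)" using b1 lnn by (metis mult_mono' one_le_numeral order.trans mult.right_neutral zero_le_one)
  have spos: "0 < s" unfolding s using bl npos by simp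
  show ep: "0 < \<epsilon>" unfolding \<epsilon> using c spos L by simp
  have s2: "s\<^sup>2 = \<beta> * ln (real n) / real n" unfolding s using bl npos by simp
  have e2: "\<epsilon>\<^sup>2 = (c / (2 * L))\<^sup>2 * (\<beta> * ln (real n) / real n)"
    unfolding \<epsilon> s2[symmetric] by (simp add: power_divide power_mult_distrib)
  have "D0 * (c / (2 * L))\<^sup>2 * \<beta> * (ln (real n) / real n) \<le> real n / ln (real n) * (ln (real n) / real n)"
    using n3 lnn npos by (intro mult_right_mono) auto
  also have "\<dots> = 1" using lnn npos n2 by simp
  finally show De: "D0 * \<epsilon>\<^sup>2 \<le> 1" unfolding e2 by (simp add: algebra_simps)
  then have "\<epsilon>\<^sup>2 \<le> 1" using D0 ep by (smt (verit) mult_le_cancel_right1 zero_le_power2)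
  then show e1: "\<epsilon> \<le> 1" using ep by (smt (verit) power2_le_imp_le one_power2)
  have Ce: "1 \<le> C / \<epsilon>" using C e1 ep by (simp add: field_simps)
  then show H0: "0 \<le> h * ln (C / \<epsilon>)" using h by simp
  define lb where "lb = ln (\<beta> * ln (real n))"
  have "ln \<epsilon> = ln (c / (2 * L)) + ln s" unfolding \<epsilon> using c L spos by (simp add: ln_mult ln_div)
  also have "ln s = (lb - ln (real n)) / 2"
    unfolding s lb_def using bl npos n2 b1 by (simp add: ln_sqrt ln_div del: ln_mult_pos)
  finally have lne: "ln \<epsilon> = ln (c / (2 * L)) + (lb - ln (real n)) / 2" .
  have lq: "ln (2 * L * C / c) = ln C - ln (c / (2 * L))"
  proof -
    have "2 * L * C / c = C / (c / (2 * L))" by simp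
    then show ?thesis using c L C by (simp only: ln_div) (simp_all add: ln_div)
  qed
  have "ln (C / \<epsilon>) = ln C - ln \<epsilon>" using C ep by (simp add: ln_div)
  also have "\<dots> = ln (2 * L * C / c) + (ln (real n) - lb) / 2"
    unfolding lne lq by (simp add: field_simps)
  finally have lnCe: "ln (C / \<epsilon>) = ln (2 * L * C / c) + (ln (real n) - lb) / 2" .
  have t1: "h * ln (2 * L * C / c) \<le> \<beta>" unfolding \<beta> using h by (intro mult_left_mono) auto
  have t2: "0 \<le> lb" unfolding lb_def using bl by simp
  have "h * ln (C / \<epsilon>) = h * ln (2 * L * C / c) + h / 2 * ln (real n) - h / 2 * lb"
    unfolding lnCe by (simp add: field_simps)
  also have "\<dots> \<le> \<beta> + \<beta> / 2 * ln (real n) - 0"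
    using t1 t2 h hb lnn by (intro diff_mono add_mono mult_right_mono divide_right_mono mult_nonneg_nonneg) auto
  also have "\<dots> \<le> \<beta> * ln (real n)"
  proof -
    have "\<beta> * 2 \<le> \<beta> * ln (real n)" using lnn b1 by (intro mult_left_mono) auto
    then show ?thesis by simp
  qed
  finally show HB: "h * ln (C / \<epsilon>) \<le> \<beta> * ln (real n)" .
  show "2 * L * \<epsilon> = c * s" unfolding \<epsilon> using L by simp
  have "sqrt ((x + h * ln (C / \<epsilon>)) / real n) \<le> sqrt ((\<beta> + x) / real n + \<beta> * ln (real n) / real n)"
    using HB b1 npos by (intro real_sqrt_le_mono) (simp add: add_divide_distrib[symmetric] divide_right_mono)
  also have "\<dots> \<le> sqrt ((\<beta> + x) / real n) + s"
    unfolding s using b1 x npos bl by (intro sqrt_add_le_add_sqrt) auto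
  finally show "c * sqrt ((x + h * ln (C / \<epsilon>)) / real n) \<le> c * sqrt ((\<beta> + x) / real n) + c * s"
    using c by (simp add: mult_left_mono distrib_left[symmetric])
  have "(C / \<epsilon>) powr h = exp (h * ln (C / \<epsilon>))" using Ce C ep by (simp add: powr_def)
  moreover have "real n * (sqrt ((x + h * ln (C / \<epsilon>)) / real n))\<^sup>2 = x + h * ln (C / \<epsilon>)"
    using x H0 npos by simp
  ultimately show "(C / \<epsilon>) powr h * exp (- real n * (sqrt ((x + h * ln (C / \<epsilon>)) / real n))\<^sup>2) = exp (- x)"
    by (simp add: exp_add[symmetric])
qed




lemma cover_ex:
  assumes "covering_number DD eps \<le> ereal B"
  shows "\<exists>Q. Q \<subseteq> DD \<and> finite Q \<and> (\<forall>D\<in>DD. \<exists>q\<in>Q. norm12 (D - q) \<le> eps) \<and> real (card Q) \<le> B"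
proof -
  define good where "good Q \<longleftrightarrow> Q \<subseteq> DD \<and> finite Q \<and> (\<forall>D\<in>DD. \<exists>q\<in>Q. norm12 (D - q) \<le> eps)" for Q
  define S where "S = {ereal (card Q) | Q. Q \<subseteq> DD \<and> finite Q \<and> (\<forall>D\<in>DD. \<exists>q\<in>Q. norm12 (D - q) \<le> eps)}"
  have cn: "covering_number DD eps = Inf S" unfolding covering_number_def S_def ..
  have ex: "\<exists>Q. good Q"
  proof (rule ccontr)
    assume "\<not> (\<exists>Q. good Q)"
    then have "S = {}" unfolding S_def good_def by blast
    then have "covering_number DD eps = \<infinity>" using cn by (simp add: top_ereal_def)
    then show False using assms by simp
  qed
  define m where "m = (LEAST k. \<exists>Q. good Q \<and> card Q = k)"
  have "\<exists>Q. good Q \<and> card Q = m" unfolding m_def by (rule LeastI_ex) (use ex in blast)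
  then obtain Q where Q: "good Q" "card Q = m" by blast
  have "ereal (real m) \<le> Inf S"
  proof (rule Inf_greatest)
    fix y assume "y \<in> S"
    then obtain Q' where "y = ereal (card Q')" "good Q'" unfolding S_def good_def by blast
    moreover have "m \<le> card Q'" unfolding m_def by (rule Least_le) (use \<open>good Q'\<close> in blast)
    ultimately show "ereal (real m) \<le> y" by simp
  qed
  then have "real m \<le> B" using assms cn by (metis ereal_less_eq(3) order_trans)
  then show ?thesis using Q unfolding good_def by blast
qed

lemma int_transfer:
  fixes f1 f2 \<phi> :: "'a \<Rightarrow> real"
  assumes "integrable M f2" "f1 \<in> borel_measurable M" "integrable M \<phi>"
    and "\<And>y. \<bar>f1 y - f2 y\<bar> \<le> \<phi> y * w"
  shows "integrable M f1"
proof -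
  have "integrable M (\<lambda>y. \<phi> y * w)" using assms(3) by simp
  moreover have "(\<lambda>y. f1 y - f2 y) \<in> borel_measurable M"
    using assms(1,2) by measurable
  ultimately have "integrable M (\<lambda>y. f1 y - f2 y)"
  proof (rule Bochner_Integration.integrable_bound)
    show "AE y in M. norm (f1 y - f2 y) \<le> norm (\<phi> y * w)"
      using assms(4) by (auto intro: order_trans[OF _ abs_ge_self])
  qed
  then have "integrable M (\<lambda>y. f2 y + (f1 y - f2 y))" by (rule Bochner_Integration.integrable_add[OF assms(1)])
  then show ?thesis by simp
qed

lemma Ef_lip:
  fixes f1 f2 \<phi> :: "'a \<Rightarrow> real"
  assumes m: "f1 \<in> borel_measurable M" "f2 \<in> borel_measurable M" and phi: "integrable M \<phi>"
    and nn: "\<And>y. 0 \<le> \<phi> y" "0 \<le> w"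
    and b: "\<And>y. \<bar>f1 y - f2 y\<bar> \<le> \<phi> y * w"
  shows "\<bar>integral\<^sup>L M f1 - integral\<^sup>L M f2\<bar> \<le> integral\<^sup>L M \<phi> * w"
proof (cases "integrable M f2")
  case True
  have b': "\<And>y. \<bar>f2 y - f1 y\<bar> \<le> \<phi> y * w" using b by (simp add: abs_minus_commute)
  have i1: "integrable M f1" by (rule int_transfer[OF True m(1) phi b])
  have iw: "integrable M (\<lambda>y. \<phi> y * w)" using phi by simp
  have "integral\<^sup>L M f1 \<le> integral\<^sup>L M (\<lambda>y. f2 y + \<phi> y * w)"
  proof (rule integral_mono[OF i1 Bochner_Integration.integrable_add[OF True iw]])
    fix y show "f1 y \<le> f2 y + \<phi> y * w" using b[of y] by (simp add: abs_le_iff)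
  qed
  also have "\<dots> = integral\<^sup>L M f2 + integral\<^sup>L M \<phi> * w" using True iw by simp
  finally have 1: "integral\<^sup>L M f1 \<le> integral\<^sup>L M f2 + integral\<^sup>L M \<phi> * w" .
  have "integral\<^sup>L M f2 \<le> integral\<^sup>L M (\<lambda>y. f1 y + \<phi> y * w)"
  proof (rule integral_mono[OF True Bochner_Integration.integrable_add[OF i1 iw]])
    fix y show "f2 y \<le> f1 y + \<phi> y * w" using b[of y] by (simp add: abs_le_iff)
  qed
  also have "\<dots> = integral\<^sup>L M f1 + integral\<^sup>L M \<phi> * w" using i1 iw by simp
  finally have 2: "integral\<^sup>L M f2 \<le> integral\<^sup>L M f1 + integral\<^sup>L M \<phi> * w" .
  from 1 2 show ?thesis by (simp add: abs_le_iff)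
next
  case False
  have b': "\<And>y. \<bar>f2 y - f1 y\<bar> \<le> \<phi> y * w" using b by (simp add: abs_minus_commute)
  have "\<not> integrable M f1"
  proof
    assume "integrable M f1"
    from int_transfer[OF this m(2) phi b'] False show False by simp
  qed
  then show ?thesis using False nn by (simp add: not_integrable_integral_eq)
qed




lemma main_abstract:
  fixes g :: "real^'d \<Rightarrow> ereal" and DD :: "(real^'d^'m) set"
    and gbar :: "real \<Rightarrow> real" and D0 a K2 :: real
    and P :: "(real^'m) measure"
    and c :: real and T :: ereal and C h L :: real and n :: nat and x :: real
  assumes gp: "gpos g"
    and gbar_meas: "gbar \<in> borel_measurable borel" and gbar_nn: "\<And>t. 0 \<le> t \<Longrightarrow> 0 \<le> gbar t"
    and lip: "\<And>y D1 D2. D1 \<in> DD \<Longrightarrow> D2 \<in> DD \<Longrightarrow> \<bar>fx g y D1 - fx g y D2\<bar>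
       \<le> (norm y * gbar ((norm y)\<^sup>2 / 2)) * (norm12 (D1 - D2) + K2 * (norm12 (D1 - D2))\<^sup>2)"
    and K2: "0 \<le> K2" "K2\<^sup>2 \<le> D0" and D0: "1 \<le> D0" and aa: "2 \<le> a" "K2 = 0 \<or> 3 \<le> a"
    and P: "prob_space P" "sets P = sets borel"
    and C2: "condC2 g DD P c T" and c_pos: "0 < c"
    and C_ge: "1 \<le> C" and h_ge: "1 \<le> h"
    and cover: "\<forall>eps. 0 < eps \<and> eps \<le> 1 \<longrightarrow> covering_number DD eps \<le> ereal ((C / eps) powr h)"
    and L: "LP gbar P < ennreal L"
    and n1: "real n / ln (real n) \<ge> 8"
    and n3: "real n / ln (real n) \<ge> D0 * (c / (2 * L))\<^sup>2 * (h * max (ln (2 * L * C / c)) 1)"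
    and x: "0 \<le> x" "T = \<infinity> \<or> x \<le> real n * (real_of_ereal T)\<^sup>2 - h * max (ln (2 * L * C / c)) 1 * ln (real n)"
    and T_pos: "0 < T"
  shows "\<exists>E \<in> sets (sample P n).
           measure (sample P n) E \<le> Lambda gbar P n L + 2 * exp (- x) \<and>
           (\<forall>X \<in> space (sample P n) - E. \<forall>D \<in> DD.
              \<bar>FX g n X D - Ef g P D\<bar> \<le>
                a * c * sqrt (h * max (ln (2 * L * C / c)) 1 * ln (real n) / real n)
                + c * sqrt ((h * max (ln (2 * L * C / c)) 1 + x) / real n))"
proof -
  interpret gpos g by (rule gp)
  define \<beta> where "\<beta> = h * max (ln (2 * L * C / c)) 1"
  define s where "s = sqrt (\<beta> * ln (real n) / real n)"
  have Lpos: "0 < L"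
  proof -
    have "0 < ennreal L" using L by (metis le_less_trans zero_le)
    then show ?thesis by simp
  qed
  define \<epsilon> where "\<epsilon> = c * s / (2 * L)"
  define H where "H = h * ln (C / \<epsilon>)"
  define \<tau> where "\<tau> = sqrt ((x + H) / real n)"
  note ar = arith_main[OF n1 n3[folded \<beta>_def] c_pos Lpos C_ge h_ge D0 x(1) \<beta>_def s_def \<epsilon>_def]
  note ar = ar[folded H_def, folded \<tau>_def]
  have ep: "0 < \<epsilon>" "\<epsilon> \<le> 1" "D0 * \<epsilon>\<^sup>2 \<le> 1" using ar(1) ar(3) ar(2) by auto
  have H0: "0 \<le> H" and HB: "H \<le> \<beta> * ln (real n)" using ar(4) ar(5) by auto
  have lnn: "2 \<le> ln (real n)" and n2: "2 \<le> n" using ln_n_ge2[OF n1] by auto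
  have npos: "0 < real n" using n2 by simp
  have tau0: "0 \<le> \<tau>" unfolding \<tau>_def using x H0 by simp
  have tauT: "ereal \<tau> \<le> T"
  proof (cases "T = \<infinity>")
    case True then show ?thesis by simp
  next
    case False
    have "T \<noteq> -\<infinity>" using T_pos by auto
    then obtain Tr where Tr: "T = ereal Tr" using False by (cases T) auto
    have "x \<le> real n * (real_of_ereal T)\<^sup>2 - \<beta> * ln (real n)" using x(2)
    proof (elim disjE)
      assume "T = \<infinity>" with False show ?thesis by simp
    next
      assume "x \<le> real n * (real_of_ereal T)\<^sup>2 - h * max (ln (2 * L * C / c)) 1 * ln (real n)"
      then show ?thesis unfolding \<beta>_def .
    qed
    then have xb: "x \<le> real n * Tr\<^sup>2 - \<beta> * ln (real n)" unfolding Tr by simp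
    have "\<tau>\<^sup>2 = (x + H) / real n" unfolding \<tau>_def using x(1) H0 npos by simp
    also have "\<dots> \<le> (real n * Tr\<^sup>2) / real n"
      by (rule divide_right_mono) (use xb HB npos in linarith, use npos in simp)
    also have "\<dots> = Tr\<^sup>2" using npos by simp
    finally have "\<tau>\<^sup>2 \<le> Tr\<^sup>2" .
    moreover have "0 \<le> Tr" using T_pos Tr by simp
    ultimately have "\<tau> \<le> Tr" by (rule power2_le_imp_le)
    then show ?thesis using Tr by simp
  qed
  have cov: "covering_number DD \<epsilon> \<le> ereal ((C / \<epsilon>) powr h)"
    using cover ep(1,2) by blast
  obtain Q where Q: "Q \<subseteq> DD" "finite Q" "\<forall>D\<in>DD. \<exists>q\<in>Q. norm12 (D - q) \<le> \<epsilon>"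
    "real (card Q) \<le> (C / \<epsilon>) powr h"
    using cover_ex[OF cov] by blast
  define M where "M = sample P n"
  have probM: "prob_space M" unfolding M_def sample_def by (rule prob_space_PiM) (use P in auto)
  interpret M: prob_space M by (rule probM)
  have spP: "space P = UNIV" using sets_eq_imp_space_eq[OF P(2)] by simp
  have eqm: "measurable P borel = measurable borel borel" by (rule measurable_cong_sets[OF P(2) refl])
  have fxm: "(\<lambda>y. fx g y D) \<in> borel_measurable P" for D
    unfolding eqm by (rule fx_borel)
  define \<phi> where "\<phi> y = norm y * gbar ((norm y)\<^sup>2 / 2)" for y :: "real^'m"
  have phib: "\<phi> \<in> borel_measurable borel" unfolding \<phi>_def
    by (intro borel_measurable_times borel_measurable_norm measurable_compose[OF _ gbar_meas]) measurable
  have phim: "\<phi> \<in> borel_measurable P" unfolding eqm by (rule phib)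
  have phinn: "0 \<le> \<phi> y" for y unfolding \<phi>_def using gbar_nn[of "(norm y)\<^sup>2 / 2"] by simp
  have comp: "(\<lambda>X. f (X i)) \<in> borel_measurable M" if "f \<in> borel_measurable P" "i \<in> {..<n}" for f :: "real^'m \<Rightarrow> real" and i
    unfolding M_def sample_def using measurable_compose[OF measurable_component_singleton[OF that(2)] that(1)] .
  have FXm: "(\<lambda>X. FX g n X D) \<in> borel_measurable M" for D
    unfolding FX_def by (intro borel_measurable_times borel_measurable_const borel_measurable_sum comp fxm)
  have LXm: "(\<lambda>X. LX gbar n X) \<in> borel_measurable M"
    unfolding LX_def \<phi>_def[symmetric]
    by (intro borel_measurable_times borel_measurable_const borel_measurable_sum comp phim)
  have LPr: "LP gbar P = (\<integral>\<^sup>+ y. ennreal (\<phi> y) \<partial>P)" unfolding LP_def \<phi>_def ..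
  have LPfin: "LP gbar P \<noteq> \<top>"
  proof -
    have "LP gbar P < \<top>" by (rule less_trans[OF L ennreal_less_top])
    then show ?thesis by (simp add: less_top)
  qed
  have phiint: "integrable P \<phi>"
  proof (rule integrableI_nn_integral_finite[OF phim])
    show "AE y in P. 0 \<le> \<phi> y" using phinn by simp
    show "(\<integral>\<^sup>+ y. ennreal (\<phi> y) \<partial>P) = ennreal (enn2real (LP gbar P))"
      unfolding LPr[symmetric] using LPfin by (simp add: ennreal_enn2real_if)
  qed
  define I where "I = integral\<^sup>L P \<phi>"
  have I0: "0 \<le> I" unfolding I_def using phinn by simp
  have IL: "I \<le> L"
  proof -
    have "(\<integral>\<^sup>+ y. ennreal (\<phi> y) \<partial>P) = ennreal I"
      unfolding I_def by (rule nn_integral_eq_integral[OF phiint]) (use phinn in simp)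
    then have "ennreal I < ennreal L" using L LPr by simp
    then show ?thesis using I0 by (simp add: ennreal_less_iff)
  qed
  define B0 where "B0 = {X \<in> space M. L < LX gbar n X}"
  define Bq where "Bq q = {X \<in> space M. c * \<tau> < \<bar>FX g n X q - Ef g P q\<bar>}" for q
  have B0s: "B0 \<in> sets M" unfolding B0_def using LXm by measurable
  have Bqs: "Bq q \<in> sets M" for q unfolding Bq_def using FXm[of q] by measurable
  define E where "E = B0 \<union> (\<Union>q\<in>Q. Bq q)"
  have UQs: "(\<Union>q\<in>Q. Bq q) \<in> sets M" using Q(2) Bqs by auto
  have Es: "E \<in> sets M" unfolding E_def using B0s UQs by auto
  have mB0: "measure M B0 = Lambda gbar P n L" unfolding B0_def Lambda_def M_def by simp
  have mBq: "measure M (Bq q) \<le> 2 * exp (- real n * \<tau>\<^sup>2)" if "q \<in> Q" for q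
  proof -
    have qq: "q \<in> DD" using that Q(1) by blast
    show ?thesis unfolding Bq_def M_def by (rule C2[unfolded condC2_def, rule_format, OF qq tau0 tauT])
  qed
  have "measure M E \<le> measure M B0 + measure M (\<Union>q\<in>Q. Bq q)"
    unfolding E_def by (rule measure_Un_le[OF B0s UQs])
  also have "measure M (\<Union>q\<in>Q. Bq q) \<le> (\<Sum>q\<in>Q. measure M (Bq q))"
    by (rule measure_UNION_le[OF Q(2)]) (use Bqs in auto)
  also have "\<dots> \<le> (\<Sum>q\<in>Q. 2 * exp (- real n * \<tau>\<^sup>2))" by (rule sum_mono) (use mBq in auto)
  also have "\<dots> = real (card Q) * (2 * exp (- real n * \<tau>\<^sup>2))" by simp
  also have "\<dots> \<le> (C / \<epsilon>) powr h * (2 * exp (- real n * \<tau>\<^sup>2))"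
    using Q(4) by (intro mult_right_mono) auto
  also have "\<dots> = 2 * exp (- x)" using ar(8) unfolding \<tau>_def by simp
  finally have mE: "measure M E \<le> Lambda gbar P n L + 2 * exp (- x)" using mB0 by simp
  define w where "w d = d + K2 * d\<^sup>2" for d
  have wmono: "w d \<le> w \<epsilon>" if "0 \<le> d" "d \<le> \<epsilon>" for d
  proof -
    have "d\<^sup>2 \<le> \<epsilon>\<^sup>2" by (rule power_mono[OF that(2) that(1)])
    then have "K2 * d\<^sup>2 \<le> K2 * \<epsilon>\<^sup>2" by (rule mult_left_mono[OF _ K2(1)])
    then show ?thesis unfolding w_def using that(2) by linarith
  qed
  have w0: "0 \<le> w d" if "0 \<le> d" for d unfolding w_def using that K2(1) by (simp add: mult_nonneg_nonneg)
  have K2e: "K2 * \<epsilon> \<le> 1"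
  proof -
    have "(K2 * \<epsilon>)\<^sup>2 \<le> D0 * \<epsilon>\<^sup>2" unfolding power_mult_distrib by (rule mult_right_mono[OF K2(2) zero_le_power2])
    then have "(K2 * \<epsilon>)\<^sup>2 \<le> 1\<^sup>2" using ep(3) by simp
    then show ?thesis by (rule power2_le_imp_le) simp
  qed
  have cs0: "0 \<le> c * s"
  proof -
    have "0 < 2 * L * \<epsilon>" using Lpos ep(1) by simp
    then show ?thesis using ar(6) by linarith
  qed
  have wfin: "2 * L * w \<epsilon> + c * \<tau> \<le> a * c * s + c * sqrt ((\<beta> + x) / real n)"
  proof -
    have "2 * L * w \<epsilon> = 2 * L * \<epsilon> + (2 * L * \<epsilon>) * (K2 * \<epsilon>)"
      unfolding w_def by (simp add: power2_eq_square distrib_left mult.assoc mult.left_commute)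
    also have "\<dots> = c * s + c * s * (K2 * \<epsilon>)" using ar(6) by simp
    finally have 1: "2 * L * w \<epsilon> = c * s + c * s * (K2 * \<epsilon>)" .
    have 2: "c * s * (K2 * \<epsilon>) \<le> (a - 2) * (c * s)"
    proof (cases "K2 = 0")
      case True then show ?thesis using aa cs0 by (simp add: mult_nonneg_nonneg)
    next
      case False
      then have a3: "3 \<le> a" using aa by simp
      have "c * s * (K2 * \<epsilon>) \<le> c * s * 1" by (rule mult_left_mono[OF K2e cs0])
      also have "\<dots> \<le> (a - 2) * (c * s)" 
        using mult_right_mono[of 1 "a - 2" "c * s"] a3 cs0 by simp
      finally show ?thesis .
    qed
    have 3: "c * \<tau> \<le> c * sqrt ((\<beta> + x) / real n) + c * s" using ar(7) unfolding \<tau>_def .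
    have 4: "(a - 2) * (c * s) = a * c * s - 2 * (c * s)" by (simp add: algebra_simps)
    from 1 2 3 4 show ?thesis by linarith
  qed
  have good: "\<bar>FX g n X D - Ef g P D\<bar> \<le> a * c * s + c * sqrt ((\<beta> + x) / real n)"
    if X: "X \<in> space M - E" and D: "D \<in> DD" for X D
  proof -
    have LXL: "LX gbar n X \<le> L" using X unfolding E_def B0_def by auto
    obtain q where q: "q \<in> Q" "norm12 (D - q) \<le> \<epsilon>" using Q(3) D by blast
    have qD: "q \<in> DD" using q Q(1) by blast
    have Bq: "\<bar>FX g n X q - Ef g P q\<bar> \<le> c * \<tau>" using X q unfolding E_def Bq_def by auto
    define d where "d = norm12 (D - q)"
    have d0: "0 \<le> d" unfolding d_def by (rule norm12_nonneg)
    have lipd: "\<bar>fx g y D - fx g y q\<bar> \<le> \<phi> y * w d" for y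
      unfolding \<phi>_def w_def d_def using lip[OF D qD] .
    have "\<bar>FX g n X D - FX g n X q\<bar> = (1 / real n) * \<bar>\<Sum>i<n. fx g (X i) D - fx g (X i) q\<bar>"
      unfolding FX_def right_diff_distrib[symmetric] sum_subtractf[symmetric] abs_mult by simp
    also have "\<dots> \<le> (1 / real n) * (\<Sum>i<n. \<phi> (X i) * w d)"
      by (intro mult_left_mono order_trans[OF sum_abs] sum_mono lipd) auto
    also have "\<dots> = LX gbar n X * w d"
      unfolding LX_def \<phi>_def by (simp add: sum_distrib_right)
    also have "\<dots> \<le> L * w \<epsilon>"
      using d_def q(2) by (intro mult_mono LXL wmono d0 w0) (use Lpos in auto)
    finally have 1: "\<bar>FX g n X D - FX g n X q\<bar> \<le> L * w \<epsilon>" .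
    have "\<bar>Ef g P D - Ef g P q\<bar> \<le> I * w d"
      unfolding Ef_def I_def by (rule Ef_lip[OF fxm fxm phiint phinn w0[OF d0] lipd])
    also have "\<dots> \<le> L * w \<epsilon>"
      using d_def q(2) by (intro mult_mono IL wmono d0 w0) (use Lpos in auto)
    finally have 2: "\<bar>Ef g P D - Ef g P q\<bar> \<le> L * w \<epsilon>" .
    have "\<bar>FX g n X D - Ef g P D\<bar> \<le> \<bar>FX g n X D - FX g n X q\<bar> + \<bar>FX g n X q - Ef g P q\<bar> + \<bar>Ef g P D - Ef g P q\<bar>"
      by linarith
    also have "\<dots> \<le> 2 * L * w \<epsilon> + c * \<tau>" using 1 2 Bq by simp
    finally show ?thesis using wfin by simp
  qed
  show ?thesis
  proof (rule bexI[of _ E])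
    show "E \<in> sets (sample P n)" using Es unfolding M_def .
    show "measure (sample P n) E \<le> Lambda gbar P n L + 2 * exp (- x) \<and>
      (\<forall>X \<in> space (sample P n) - E. \<forall>D \<in> DD. \<bar>FX g n X D - Ef g P D\<bar> \<le>
        a * c * sqrt (h * max (ln (2 * L * C / c)) 1 * ln (real n) / real n)
        + c * sqrt ((h * max (ln (2 * L * C / c)) 1 + x) / real n))"
      using mE good unfolding M_def[symmetric] s_def \<beta>_def by simp
  qed
qed




theorem theorem1:
  fixes g :: "real^'d \<Rightarrow> ereal" and DD :: "(real^'d^'m) set"
    and gbar :: "real \<Rightarrow> real" and D0 a :: real
    and P :: "(real^'m) measure"
    and c :: real and T :: ereal and C h L :: real and n :: nat and x :: real
  assumes pen: "is_penalty g"
    and scen: "scenario g DD gbar D0 a"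
    and P: "prob_space P" "sets P = sets borel"
    and C1: "LP gbar P < \<infinity>"
    and C2: "condC2 g DD P c T" and c_pos: "0 < c" and T_pos: "0 < T"
    and C_ge: "1 \<le> C" and h_ge: "1 \<le> h"
    and cover: "\<forall>eps. 0 < eps \<and> eps \<le> 1 \<longrightarrow> covering_number DD eps \<le> ereal ((C / eps) powr h)"
    and L: "LP gbar P < ennreal L"
    and n1: "real n / ln (real n) \<ge> 8"
    and n2: "T = \<infinity> \<or> real n / ln (real n) \<ge>
               h * max (ln (2 * L * C / c)) 1 / (real_of_ereal T)\<^sup>2"
    and n3: "real n / ln (real n) \<ge> D0 * (c / (2 * L))\<^sup>2 * (h * max (ln (2 * L * C / c)) 1)"
    and x: "0 \<le> x" "T = \<infinity> \<or> x \<le> real n * (real_of_ereal T)\<^sup>2 - h * max (ln (2 * L * C / c)) 1 * ln (real n)"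
  shows "\<exists>E \<in> sets (sample P n).
           measure (sample P n) E \<le> Lambda gbar P n L + 2 * exp (- x) \<and>
           (\<forall>X \<in> space (sample P n) - E. \<forall>D \<in> DD.
              \<bar>FX g n X D - Ef g P D\<bar> \<le>
                a * c * sqrt (h * max (ln (2 * L * C / c)) 1 * ln (real n) / real n)
                + c * sqrt ((h * max (ln (2 * L * C / c)) 1 + x) / real n))"
proof -
  from scen consider
      (CA) "assmA g" "gbar = gbarA g" "D0 = 1" "a = 2"
    | (B1) kappa where "assmB123 g DD kappa" "convex DD" "gbar = gbarB kappa" "D0 = 1" "a = 2"
    | (B2) kappa where "assmB123 g DD kappa" "gbar = gbarB kappa" "D0 = max (1 / kappa) 1" "a = 3"
    unfolding scenario_def by blast
  then show ?thesis
  proof cases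
    case CA
    interpret caseA g by unfold_locales (rule CA(1))
    have gp: "gpos g" by unfold_locales (auto simp: g_nonneg g_zero)
    show ?thesis
    proof (rule main_abstract[OF gp, of gbar DD 0 D0 a])
      show "gbar \<in> borel_measurable borel" unfolding CA(2) by (rule borel_measurable_mono[OF gbar_mono])
      show "\<And>t. 0 \<le> t \<Longrightarrow> 0 \<le> gbar t" unfolding CA(2) by (rule gbar_nonneg)
      show "\<And>y D1 D2. D1 \<in> DD \<Longrightarrow> D2 \<in> DD \<Longrightarrow> \<bar>fx g y D1 - fx g y D2\<bar>
       \<le> (norm y * gbar ((norm y)\<^sup>2 / 2)) * (norm12 (D1 - D2) + 0 * (norm12 (D1 - D2))\<^sup>2)"
        unfolding CA(2) using lipA by simp
    qed (use CA assms in auto)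
  next
    case (B1 kappa)
    interpret caseB g DD kappa by unfold_locales (rule B1(1))
    have gp: "gpos g" by unfold_locales (auto simp: g_nonneg g_zero)
    show ?thesis
    proof (rule main_abstract[OF gp, of gbar DD 0 D0 a])
      show "gbar \<in> borel_measurable borel" unfolding B1(3) gbarB_def by measurable
      show "\<And>t. 0 \<le> t \<Longrightarrow> 0 \<le> gbar t" unfolding B1(3) gbarB_def using kpos by simp
      show "\<And>y D1 D2. D1 \<in> DD \<Longrightarrow> D2 \<in> DD \<Longrightarrow> \<bar>fx g y D1 - fx g y D2\<bar>
       \<le> (norm y * gbar ((norm y)\<^sup>2 / 2)) * (norm12 (D1 - D2) + 0 * (norm12 (D1 - D2))\<^sup>2)"
        unfolding B1(3) using lipB_convex[OF B1(2)] by simp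
    qed (use B1 assms in auto)
  next
    case (B2 kappa)
    interpret caseB g DD kappa by unfold_locales (rule B2(1))
    have gp: "gpos g" by unfold_locales (auto simp: g_nonneg g_zero)
    have K2sq: "(1 / sqrt kappa)\<^sup>2 \<le> D0" unfolding B2(3) using kpos by (simp add: power_divide)
    have D01: "1 \<le> D0" unfolding B2(3) by simp
    show ?thesis
    proof (rule main_abstract[OF gp, of gbar DD "1 / sqrt kappa" D0 a])
      show "gbar \<in> borel_measurable borel" unfolding B2(2) gbarB_def by measurable
      show "\<And>t. 0 \<le> t \<Longrightarrow> 0 \<le> gbar t" unfolding B2(2) gbarB_def using kpos by simp
      show "\<And>y D1 D2. D1 \<in> DD \<Longrightarrow> D2 \<in> DD \<Longrightarrow> \<bar>fx g y D1 - fx g y D2\<bar>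
       \<le> (norm y * gbar ((norm y)\<^sup>2 / 2)) * (norm12 (D1 - D2) + 1 / sqrt kappa * (norm12 (D1 - D2))\<^sup>2)"
        unfolding B2(2) using lipB by simp
    qed (use B2 assms K2sq D01 kpos in auto)
  qed
qed


end
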